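(* In the setting described in the context, let $\emptyset\subsetneq\mathcal A\subsetneq\mathcal C^*$ and $\mathcal S=\bigcup_{v\in\mathcal A}\mathcal U_v$. Suppose $y'_{\mathcal S}\ge\lfloor y_{\mathcal S}\rfloor$ and $x_{\mathcal S,\mathcal J}\le f(|\mathcal J|,y_{\mathcal S})$ for every $\mathcal J\subseteq\mathcal C$. Then $$\big(y'_{\mathcal S}-\lfloor y'_{\mathcal S}\rfloor\big)\big(\lceil y_{\mathcal S}\rceil-y_{\mathcal S}\big)\,d(\mathcal A,\mathcal C^*\setminus\mathcal A)\ \le\ \frac4u D_{\mathcal S}+\frac{4\ell+2}{u}D'_{\mathcal S}.$$
   Context: Setting: finite sets $\mathcal F$ (facility locations) and $\mathcal C$ (clients), a metric $d$ on $\mathcal F\cup\mathcal C$, positive integers $k,u,\ell$, and reals $x_{i,j}\ge0$, $y_i\ge0$ with $\sum_{i\in\mathcal F}x_{i,j}=1$ for all $j$, $\sum_iy_i\le k$, $x_{i,j}\le y_i$, $\sum_jx_{i,j}\le uy_i$. Notation: $y_{\mathcal B}=\sum_{i\in\mathcal B}y_i$, $x_{\mathcal B,j}=\sum_{i\in\mathcal B}x_{i,j}$, $x_{\mathcal B,\mathcal J}=\sum_{i\in\mathcal B,j\in\mathcal J}x_{i,j}$, $y'_{\mathcal B}=\frac1u\sum_{j\in\mathcal C}x_{\mathcal B,j}$; $d(\mathcal X,\mathcal Y)=\min_{a\in\mathcal X,b\in\mathcal Y}d(a,b)$; $d_{av}(j)=\sum_ix_{i,j}d(i,j)$; $D_i=\sum_jx_{i,j}d(i,j)$,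 $D'_i=\sum_jx_{i,j}d_{av}(j)$, $D_{\mathcal B}=\sum_{i\in\mathcal B}D_i$, $D'_{\mathcal B}=\sum_{i\in\mathcal B}D'_i$. The function $f:\mathbb Z_{\ge0}\times\mathbb R_{\ge0}\to\mathbb R$ is $f(p,q)=qu$ if $q\le\lfloor p/u\rfloor$; $u\lfloor p/u\rfloor+u(p/u-\lfloor p/u\rfloor)(q-\lfloor p/u\rfloor)$ if $\lfloor p/u\rfloor<q<\lceil p/u\rceil$; $p$ if $q\ge\lceil p/u\rceil$. Construction of $\mathcal C^*\subseteq\mathcal C$: start with $\mathcal C^*=\emptyset$, $R=\mathcal C$; while $R\ne\emptyset$, choose $v\in R$ with smallest $d_{av}(v)$, add it to $\mathcal C^*$, and remove from $R$ all $j\in R$ with $d(j,v)\le2\ell d_{av}(j)$. Each $i\in\mathcal F$ is put into $\mathcal U_v$ for one $v\in\mathcal C^*$ closest to $i$ (ties arbitrary). *)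

theory Defs
  imports Complex_Main
begin

definition d_av :: "'a set \<Rightarrow> ('a \<Rightarrow> 'a \<Rightarrow> real) \<Rightarrow> ('a \<Rightarrow> 'a \<Rightarrow> real) \<Rightarrow> 'a \<Rightarrow> real" where
  "d_av F x d j = (\<Sum>i\<in>F. x i j * d i j)"

text \<open>One run of the greedy construction of C*: states (chosen set, remaining set R).
  A step picks v in R with smallest d_av, adds it, and removes all j in R with
  d(j,v) \<le> 2 l d_av(j).\<close>
inductive greedy_run :: "('a \<Rightarrow> real) \<Rightarrow> ('a \<Rightarrow> 'a \<Rightarrow> real) \<Rightarrow> nat \<Rightarrow> 'a set \<Rightarrow> 'a set \<Rightarrow> 'a set \<Rightarrow> 'a set \<Rightarrow> bool"
  for dav d l where
  stop: "greedy_run dav d l S R S R"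
| step: "v \<in> R \<Longrightarrow> (\<forall>j\<in>R. dav v \<le> dav j) \<Longrightarrow>
         greedy_run dav d l (insert v S) {j \<in> R. \<not> d j v \<le> 2 * real l * dav j} S' R' \<Longrightarrow>
         greedy_run dav d l S R S' R'"

definition is_Cstar :: "'a set \<Rightarrow> ('a \<Rightarrow> real) \<Rightarrow> ('a \<Rightarrow> 'a \<Rightarrow> real) \<Rightarrow> nat \<Rightarrow> 'a set \<Rightarrow> bool" where
  "is_Cstar C dav d l Cs = greedy_run dav d l {} C Cs {}"

text \<open>U_v for an assignment sigma of facilities to a closest point of C*.\<close>
definition U_set :: "'a set \<Rightarrow> ('a \<Rightarrow> 'a) \<Rightarrow> 'a \<Rightarrow> 'a set" where
  "U_set F sigma v = {i \<in> F. sigma i = v}"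

definition set_dist :: "('a \<Rightarrow> 'a \<Rightarrow> real) \<Rightarrow> 'a set \<Rightarrow> 'a set \<Rightarrow> real" where
  "set_dist d X Y = Min {d a b | a b. a \<in> X \<and> b \<in> Y}"

definition f_fun :: "nat \<Rightarrow> nat \<Rightarrow> real \<Rightarrow> real" where
  "f_fun u p q =
     (if q \<le> real (p div u) then q * real u
      else if q < of_int \<lceil>real p / real u\<rceil>
        then real u * real (p div u) + real u * (real p / real u - real (p div u)) * (q - real (p div u))
      else real p)"

end

theory Submission imports Defs begin

lemma greedy_cover:
  "greedy_run dav d l S R S' R' \<Longrightarrow>
   S \<subseteq> S' \<and> S' \<subseteq> S \<union> R \<and> (\<forall>j\<in>R. j \<in> R' \<or> (\<exists>c\<in>S'. d j c \<le> 2 * real l * dav j))"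
proof (induction rule: greedy_run.induct)
  case (stop S R)
  then show ?case by simp
next
  case (step v R S S' R')
  then show ?case by blast
qed

lemma f_le:
  assumes u: "u > 0" and q0: "q \<ge> 0" and nint: "of_int \<lceil>q\<rceil> \<noteq> q"
  shows "f_fun u p q \<le> (q - of_int \<lfloor>q\<rfloor>) * real p + (of_int \<lfloor>q\<rfloor> + 1 - q) * real u * of_int \<lfloor>q\<rfloor>"
proof -
  define m where "m = \<lfloor>q\<rfloor>"
  define D where "D = p div u"
  have mq: "of_int m < q"
  proof -
    have "of_int m \<le> q" by (simp add: m_def)
    moreover have "of_int m \<noteq> q"
    proof
      assume e: "of_int m = q"
      then have "\<lceil>q\<rceil> = m" by (metis ceiling_of_int)
      then show False using nint e by simp
    qed
    ultimately show ?thesis by simp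
  qed
  have qm: "q < of_int m + 1" using m_def by linarith
  have pe: "p = D * u + p mod u" unfolding D_def by simp
  have pm: "p mod u < u" using u by simp
  have "D * u \<le> p" using pe by linarith
  then have Du1: "real D * real u \<le> real p" by (metis of_nat_le_iff of_nat_mult)
  have "p < (D+1) * u" using pe pm by (simp add: algebra_simps)
  then have Du2: "real p < (real D + 1) * real u" by (metis of_nat_1 of_nat_add of_nat_less_iff of_nat_mult)
  have up: "real u > 0" using u by simp
  show ?thesis
  proof (cases "q \<le> real D")
    case True
    then have "of_int m + 1 \<le> real D" using mq
      by (metis floor_le_iff le_less of_int_less_iff of_int_of_nat_eq floor_of_nat less_le_trans m_def nint ceiling_le_iff ceiling_of_nat
          add_le_cancel_right not_le)
    then have h: "real p - (of_int m + 1) * real u \<ge> 0"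
      using Du1 up by (smt (verit) mult_right_mono)
    have "(q - of_int m) * (real p - (of_int m + 1) * real u) \<ge> 0" using h mq by simp
    moreover have "(q - of_int m) * real p + (of_int m + 1 - q) * real u * of_int m - q * real u
        = (q - of_int m) * (real p - (of_int m + 1) * real u)" by (simp add: algebra_simps)
    ultimately show ?thesis using True unfolding f_fun_def D_def[symmetric] m_def[symmetric]
      by (simp add: mult.commute)
  next
    case False
    note F1 = False
    show ?thesis
    proof (cases "q < of_int \<lceil>real p / real u\<rceil>")
      case True
      have "real p / real u < real D + 1" using Du2 up by (simp add: divide_less_eq)
      then have "\<lceil>real p / real u\<rceil> \<le> int D + 1"
        by (simp add: ceiling_le_iff) 
      then have "real_of_int \<lceil>real p / real u\<rceil> \<le> real_of_int (int D + 1)"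
        by (simp only: of_int_le_iff)
      then have "q < real D + 1" using True by simp
      then have mD: "m = int D" using F1 m_def by (simp add: floor_eq_iff)
      have "real u * (real p / real u) = real p" using up by simp
      then show ?thesis using F1 True unfolding f_fun_def D_def[symmetric] m_def[symmetric] mD
        by (simp add: algebra_simps)
    next
      case False
      then have "of_int \<lceil>real p / real u\<rceil> \<le> q" by simp
      then have "\<lceil>real p / real u\<rceil> \<le> m" using m_def by (simp add: le_floor_iff)
      then have "real p / real u \<le> of_int m" by (meson ceiling_le_iff)
      then have pm: "real p \<le> of_int m * real u" using up by (simp add: divide_le_eq)
      have "(of_int m + 1 - q) * real p \<le> (of_int m + 1 - q) * (of_int m * real u)"
        using pm qm by (intro mult_left_mono) auto
      then show ?thesis using F1 False unfolding f_fun_def D_def[symmetric] m_def[symmetric]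
        by (simp add: algebra_simps)
    qed
  qed
qed

lemma T_bound:
  fixes a :: "'a \<Rightarrow> real"
  assumes fin: "finite C" and a01: "\<forall>j\<in>C. 0 \<le> a j \<and> a j \<le> 1"
    and t0: "0 \<le> t" and t1: "t \<le> 1"
    and h: "\<forall>J\<subseteq>C. sum a J \<le> t * real (card J) + c"
  shows "(1 - t) * sum a C - c \<le> (\<Sum>j\<in>C. a j * (1 - a j))"
proof -
  define J where "J = {j\<in>C. t < a j}"
  have JC: "J \<subseteq> C" and finJ: "finite J" using fin unfolding J_def by auto
  have s1: "(\<Sum>j\<in>J. t * (1 - a j)) \<le> (\<Sum>j\<in>J. a j * (1 - a j))"
    apply (rule sum_mono) using a01 unfolding J_def by (auto intro: mult_right_mono)
  have s2: "(\<Sum>j\<in>C-J. (1 - t) * a j) \<le> (\<Sum>j\<in>C-J. a j * (1 - a j))"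
  proof (rule sum_mono)
    fix j assume "j \<in> C - J"
    then have "a j \<le> t" "0 \<le> a j" using a01 unfolding J_def by auto
    then show "(1 - t) * a j \<le> a j * (1 - a j)" by (simp add: mult.commute mult_left_mono)
  qed
  have e1: "(\<Sum>j\<in>J. t * (1 - a j)) = t * real (card J) - t * sum a J"
    by (simp add: sum_distrib_left[symmetric] sum_subtractf right_diff_distrib)
  have e2: "(\<Sum>j\<in>C-J. (1 - t) * a j) = (1 - t) * (sum a C - sum a J)"
    by (simp add: sum_distrib_left[symmetric] sum_diff fin JC)
  have split: "(\<Sum>j\<in>C. a j * (1 - a j)) = (\<Sum>j\<in>J. a j * (1 - a j)) + (\<Sum>j\<in>C-J. a j * (1 - a j))"
    by (metis JC fin sum.subset_diff add.commute)
  have "sum a J \<le> t * real (card J) + c" using h JC by blast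
  then show ?thesis using s1 s2 e1 e2 split by (simp add: algebra_simps)
qed

theorem lemma2:
  fixes F C :: "'a set" and d :: "'a \<Rightarrow> 'a \<Rightarrow> real"
    and k u l :: nat and x :: "'a \<Rightarrow> 'a \<Rightarrow> real" and y :: "'a \<Rightarrow> real"
    and Cs A :: "'a set" and sigma :: "'a \<Rightarrow> 'a"
  assumes finF: "finite F" and finC: "finite C"
    and d_nonneg: "\<forall>a\<in>F \<union> C. \<forall>b\<in>F \<union> C. d a b \<ge> 0"
    and d_zero: "\<forall>a\<in>F \<union> C. \<forall>b\<in>F \<union> C. d a b = 0 \<longleftrightarrow> a = b"
    and d_sym: "\<forall>a\<in>F \<union> C. \<forall>b\<in>F \<union> C. d a b = d b a"
    and d_tri: "\<forall>a\<in>F \<union> C. \<forall>b\<in>F \<union> C. \<forall>c\<in>F \<union> C. d a c \<le> d a b + d b c"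
    and kpos: "k > 0" and upos: "u > 0" and lpos: "l > 0"
    and x_nonneg: "\<forall>i\<in>F. \<forall>j\<in>C. x i j \<ge> 0"
    and y_nonneg: "\<forall>i\<in>F. y i \<ge> 0"
    and x_sum: "\<forall>j\<in>C. (\<Sum>i\<in>F. x i j) = 1"
    and y_sum: "(\<Sum>i\<in>F. y i) \<le> real k"
    and x_le_y: "\<forall>i\<in>F. \<forall>j\<in>C. x i j \<le> y i"
    and cap: "\<forall>i\<in>F. (\<Sum>j\<in>C. x i j) \<le> real u * y i"
    and Cstar: "is_Cstar C (d_av F x d) d l Cs"
    and sigma: "\<forall>i\<in>F. sigma i \<in> Cs \<and> (\<forall>v\<in>Cs. d i (sigma i) \<le> d i v)"
    and A_ne: "A \<noteq> {}" and A_sub: "A \<subset> Cs"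
    and hyp1: "(1 / real u) * (\<Sum>j\<in>C. \<Sum>i\<in>(\<Union>v\<in>A. U_set F sigma v). x i j)
               \<ge> of_int \<lfloor>\<Sum>i\<in>(\<Union>v\<in>A. U_set F sigma v). y i\<rfloor>"
    and hyp2: "\<forall>J. J \<subseteq> C \<longrightarrow>
               (\<Sum>i\<in>(\<Union>v\<in>A. U_set F sigma v). \<Sum>j\<in>J. x i j)
               \<le> f_fun u (card J) (\<Sum>i\<in>(\<Union>v\<in>A. U_set F sigma v). y i)"
  shows "let S = (\<Union>v\<in>A. U_set F sigma v);
             yS = (\<Sum>i\<in>S. y i);
             y'S = (1 / real u) * (\<Sum>j\<in>C. \<Sum>i\<in>S. x i j);
             DS = (\<Sum>i\<in>S. \<Sum>j\<in>C. x i j * d i j);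
             D'S = (\<Sum>i\<in>S. \<Sum>j\<in>C. x i j * d_av F x d j)
         in (y'S - of_int \<lfloor>y'S\<rfloor>) * (of_int \<lceil>yS\<rceil> - yS) * set_dist d A (Cs - A)
            \<le> 4 / real u * DS + (4 * real l + 2) / real u * D'S"
proof -
  define S where "S = (\<Union>v\<in>A. U_set F sigma v)"
  define dv where "dv = d_av F x d"
  have memS: "\<And>i. i \<in> S \<longleftrightarrow> i \<in> F \<and> sigma i \<in> A" unfolding S_def U_set_def by auto
  have SF: "S \<subseteq> F" using memS by auto
  have finS: "finite S" using SF finF finite_subset by blast
  have gc: "{} \<subseteq> Cs \<and> Cs \<subseteq> {} \<union> C \<and> (\<forall>j\<in>C. j \<in> {} \<or> (\<exists>c\<in>Cs. d j c \<le> 2 * real l * dv j))"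
    using greedy_cover[OF Cstar[unfolded is_Cstar_def]] unfolding dv_def by blast
  have CsC: "Cs \<subseteq> C" using gc by auto
  have cover: "\<And>j. j \<in> C \<Longrightarrow> \<exists>c\<in>Cs. d j c \<le> 2 * real l * dv j" using gc by auto
  have dnn: "\<And>a b. a \<in> F \<union> C \<Longrightarrow> b \<in> F \<union> C \<Longrightarrow> d a b \<ge> 0" using d_nonneg by blast
  have dsym: "\<And>a b. a \<in> F \<union> C \<Longrightarrow> b \<in> F \<union> C \<Longrightarrow> d a b = d b a" using d_sym by blast
  have dtri: "\<And>a b c. a \<in> F \<union> C \<Longrightarrow> b \<in> F \<union> C \<Longrightarrow> c \<in> F \<union> C \<Longrightarrow> d a c \<le> d a b + d b c"
    using d_tri by blast
  have xnn: "\<And>i j. i \<in> F \<Longrightarrow> j \<in> C \<Longrightarrow> x i j \<ge> 0" using x_nonneg by blast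
  have xd_nn: "\<And>i j. i \<in> F \<Longrightarrow> j \<in> C \<Longrightarrow> x i j * d i j \<ge> 0" using xnn dnn by simp
  have dv_nn: "\<And>j. j \<in> C \<Longrightarrow> dv j \<ge> 0"
    unfolding dv_def d_av_def using xd_nn by (simp add: sum_nonneg)
  define a where "a j = (\<Sum>i\<in>S. x i j)" for j
  have acomp: "\<And>j. j \<in> C \<Longrightarrow> 1 - a j = (\<Sum>i\<in>F-S. x i j)"
  proof -
    fix j assume j: "j \<in> C"
    have "(\<Sum>i\<in>F. x i j) = (\<Sum>i\<in>F-S. x i j) + (\<Sum>i\<in>S. x i j)"
      using sum.subset_diff[OF SF finF] by simp
    then show "1 - a j = (\<Sum>i\<in>F-S. x i j)" using x_sum j unfolding a_def by simp
  qed
  have a01: "\<forall>j\<in>C. 0 \<le> a j \<and> a j \<le> 1"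
  proof
    fix j assume j: "j \<in> C"
    have "0 \<le> a j" unfolding a_def using xnn SF j by (meson subsetD sum_nonneg)
    moreover have "0 \<le> 1 - a j" unfolding acomp[OF j] using xnn j by (intro sum_nonneg) auto
    ultimately show "0 \<le> a j \<and> a j \<le> 1" by simp
  qed
  define D where "D = set_dist d A (Cs - A)"
  define PS where "PS = {d v w | v w. v \<in> A \<and> w \<in> Cs - A}"
  have finCs: "finite Cs" using CsC finC finite_subset by blast
  have finPS: "finite PS"
  proof -
    have "PS = (\<lambda>(v, w). d v w) ` (A \<times> (Cs - A))" unfolding PS_def by auto
    moreover have "finite (A \<times> (Cs - A))" using finCs A_sub
      by (meson finite_Diff finite_SigmaI finite_subset psubset_imp_subset)
    ultimately show ?thesis by simp
  qed
  have D_le: "\<And>v w. v \<in> A \<Longrightarrow> w \<in> Cs - A \<Longrightarrow> D \<le> d v w"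
    unfolding D_def set_dist_def PS_def[symmetric] using finPS unfolding PS_def by (auto intro: Min_le)
  have D_nn: "D \<ge> 0"
  proof -
    obtain w where w: "w \<in> Cs - A" using A_sub by blast
    obtain v where v: "v \<in> A" using A_ne by blast
    have "PS \<noteq> {}" using v w unfolding PS_def by blast
    then have "D \<in> PS" unfolding D_def set_dist_def PS_def[symmetric] using finPS Min_in by blast
    then obtain v w where "D = d v w" "v \<in> A" "w \<in> Cs - A" unfolding PS_def by blast
    then show ?thesis using A_sub CsC dnn by blast
  qed
  have pair: "D \<le> 2 * d i j + 2 * d i' j + 4 * real l * dv j"
    if j: "j \<in> C" and i: "i \<in> S" and i': "i' \<in> F - S" for j i i'
  proof -
    have iF: "i \<in> F" and si: "sigma i \<in> A" using i memS by auto
    have i'F: "i' \<in> F" and si': "sigma i' \<in> Cs - A" using i' memS sigma by auto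
    obtain c where c: "c \<in> Cs" "d j c \<le> 2 * real l * dv j" using cover[OF j] by blast
    have siC: "sigma i \<in> F \<union> C" and si'C: "sigma i' \<in> F \<union> C" and cC: "c \<in> F \<union> C"
      using si si' c(1) A_sub CsC by auto
    have jC: "j \<in> F \<union> C" and iC: "i \<in> F \<union> C" and i'C: "i' \<in> F \<union> C" using j iF i'F by auto
    have "D \<le> d (sigma i) (sigma i')" using D_le si si' by blast
    moreover have "d (sigma i) (sigma i') \<le> d (sigma i) i + d i (sigma i')" using dtri siC iC si'C by blast
    moreover have "d i (sigma i') \<le> d i j + d j (sigma i')" using dtri iC jC si'C by blast
    moreover have "d j (sigma i') \<le> d j i' + d i' (sigma i')" using dtri jC i'C si'C by blast
    moreover have "d (sigma i) i = d i (sigma i)" using dsym siC iC by blast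
    moreover have "d i (sigma i) \<le> d i c" using sigma iF c(1) by blast
    moreover have "d i' (sigma i') \<le> d i' c" using sigma i'F c(1) by blast
    moreover have "d i c \<le> d i j + d j c" using dtri iC jC cC by blast
    moreover have "d i' c \<le> d i' j + d j c" using dtri i'C jC cC by blast
    moreover have "d j i' = d i' j" using dsym jC i'C by blast
    ultimately show ?thesis using c(2) by linarith
  qed
  have inner: "D * x i j * (1 - a j) \<le> 2 * (x i j * d i j) + (4 * real l + 2) * (x i j * dv j)"
    if j: "j \<in> C" and i: "i \<in> S" for i j
  proof -
    have iF: "i \<in> F" using i SF by auto
    have "D * x i j * (1 - a j) = (\<Sum>i'\<in>F-S. D * (x i j * x i' j))"
      unfolding acomp[OF j] by (simp add: sum_distrib_left mult.assoc)
    also have "\<dots> \<le> (\<Sum>i'\<in>F-S. (2 * d i j + 2 * d i' j + 4 * real l * dv j) * (x i j * x i' j))"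
    proof (rule sum_mono)
      fix i' assume i': "i' \<in> F - S"
      have "x i j * x i' j \<ge> 0" using xnn iF i' j by simp
      with pair[OF j i i'] show "D * (x i j * x i' j) \<le> (2 * d i j + 2 * d i' j + 4 * real l * dv j) * (x i j * x i' j)"
        by (rule mult_right_mono)
    qed
    also have "\<dots> = 2 * (x i j * d i j) * (\<Sum>i'\<in>F-S. x i' j) + 2 * x i j * (\<Sum>i'\<in>F-S. x i' j * d i' j)
        + 4 * real l * dv j * x i j * (\<Sum>i'\<in>F-S. x i' j)"
      by (simp add: sum_distrib_left sum.distrib algebra_simps)
    also have "\<dots> \<le> 2 * (x i j * d i j) + 2 * x i j * dv j + 4 * real l * dv j * x i j"
    proof -
      have s01: "0 \<le> (\<Sum>i'\<in>F-S. x i' j)" "(\<Sum>i'\<in>F-S. x i' j) \<le> 1"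
        using a01 j acomp[OF j] by auto
      have "(\<Sum>i'\<in>F-S. x i' j * d i' j) \<le> (\<Sum>i'\<in>F. x i' j * d i' j)"
        using finF xd_nn j by (intro sum_mono2) auto
      then have sd: "(\<Sum>i'\<in>F-S. x i' j * d i' j) \<le> dv j" unfolding dv_def d_av_def .
      have x0: "0 \<le> x i j" using xnn iF j by simp
      have t1: "2 * (x i j * d i j) * (\<Sum>i'\<in>F-S. x i' j) \<le> 2 * (x i j * d i j)"
        using xd_nn[OF iF j] s01 by (simp add: mult_left_le)
      have t2: "2 * x i j * (\<Sum>i'\<in>F-S. x i' j * d i' j) \<le> 2 * x i j * dv j"
        using sd x0 by (simp add: mult_left_mono)
      have t3: "4 * real l * dv j * x i j * (\<Sum>i'\<in>F-S. x i' j) \<le> 4 * real l * dv j * x i j"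
        using s01 dv_nn[OF j] x0 by (simp add: mult_left_le)
      show ?thesis using t1 t2 t3 by linarith
    qed
    also have "\<dots> = 2 * (x i j * d i j) + (4 * real l + 2) * (x i j * dv j)" by (simp add: algebra_simps)
    finally show ?thesis .
  qed
  have perj: "D * (a j * (1 - a j)) \<le> 2 * (\<Sum>i\<in>S. x i j * d i j) + (4 * real l + 2) * (\<Sum>i\<in>S. x i j * dv j)"
    if j: "j \<in> C" for j
  proof -
    have "D * (a j * (1 - a j)) = (\<Sum>i\<in>S. D * x i j * (1 - a j))"
      unfolding a_def by (simp add: sum_distrib_left sum_distrib_right mult.assoc)
    also have "\<dots> \<le> (\<Sum>i\<in>S. 2 * (x i j * d i j) + (4 * real l + 2) * (x i j * dv j))"
      using inner[OF j] by (rule sum_mono)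
    also have "\<dots> = 2 * (\<Sum>i\<in>S. x i j * d i j) + (4 * real l + 2) * (\<Sum>i\<in>S. x i j * dv j)"
      by (simp add: sum.distrib sum_distrib_left)
    finally show ?thesis .
  qed
  define DS where "DS = (\<Sum>i\<in>S. \<Sum>j\<in>C. x i j * d i j)"
  define D'S where "D'S = (\<Sum>i\<in>S. \<Sum>j\<in>C. x i j * d_av F x d j)"
  define T where "T = (\<Sum>j\<in>C. a j * (1 - a j))"
  have DT: "D * T \<le> 2 * DS + (4 * real l + 2) * D'S"
  proof -
    have "D * T = (\<Sum>j\<in>C. D * (a j * (1 - a j)))" unfolding T_def by (simp add: sum_distrib_left)
    also have "\<dots> \<le> (\<Sum>j\<in>C. 2 * (\<Sum>i\<in>S. x i j * d i j) + (4 * real l + 2) * (\<Sum>i\<in>S. x i j * dv j))"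
      using perj by (rule sum_mono)
    also have "\<dots> = 2 * DS + (4 * real l + 2) * D'S"
      unfolding DS_def D'S_def dv_def
      by (simp add: sum.distrib sum_distrib_left sum.swap[of _ S C])
    finally show ?thesis .
  qed
  have DS_nn: "DS \<ge> 0" unfolding DS_def using xd_nn SF by (auto intro!: sum_nonneg)
  have D'S_nn: "D'S \<ge> 0" unfolding D'S_def using xnn dv_nn SF unfolding dv_def
    by (auto intro!: sum_nonneg)
  define q where "q = (\<Sum>i\<in>S. y i)"
  define y' where "y' = (1 / real u) * (\<Sum>j\<in>C. \<Sum>i\<in>S. x i j)"
  have q0: "q \<ge> 0" unfolding q_def using y_nonneg SF by (auto intro!: sum_nonneg)
  have up: "real u > 0" using upos by simp
  have suma: "sum a C = real u * y'" unfolding y'_def a_def using up by simp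
  have hyp1': "of_int \<lfloor>q\<rfloor> \<le> y'" using hyp1 unfolding q_def y'_def S_def .
  have main: "(y' - of_int \<lfloor>y'\<rfloor>) * (of_int \<lceil>q\<rceil> - q) * D \<le> 4 / real u * DS + (4 * real l + 2) / real u * D'S"
  proof (cases "of_int \<lceil>q\<rceil> = q")
    case True
    have "0 \<le> 4 / real u * DS + (4 * real l + 2) / real u * D'S" using DS_nn D'S_nn up by simp
    moreover have "of_int \<lceil>q\<rceil> - q = 0" using True by simp
    ultimately show ?thesis by (simp only: mult_zero_right mult_zero_left)
  next
    case False
    define m where "m = \<lfloor>q\<rfloor>"
    have cm: "\<lceil>q\<rceil> = m + 1" unfolding m_def using False
      by (metis ceiling_altdef)
    have mq: "of_int m \<le> q" "q < of_int m + 1" unfolding m_def by linarith+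
    have hJ: "\<forall>J\<subseteq>C. sum a J \<le> (q - of_int m) * real (card J) + (of_int m + 1 - q) * real u * of_int m"
    proof (intro allI impI)
      fix J assume J: "J \<subseteq> C"
      have "sum a J = (\<Sum>i\<in>S. \<Sum>j\<in>J. x i j)" unfolding a_def by (rule sum.swap)
      also have "\<dots> \<le> f_fun u (card J) q" using hyp2 J unfolding q_def S_def by blast
      also have "\<dots> \<le> (q - of_int m) * real (card J) + (of_int m + 1 - q) * real u * of_int m"
        using f_le[OF upos q0 False] unfolding m_def .
      finally show "sum a J \<le> (q - of_int m) * real (card J) + (of_int m + 1 - q) * real u * of_int m" .
    qed
    have Tb: "(1 - (q - of_int m)) * sum a C - (of_int m + 1 - q) * real u * of_int m \<le> T"
      unfolding T_def using T_bound[OF finC a01 _ _ hJ] mq by simp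
    have Tb2: "real u * ((of_int m + 1 - q) * (y' - of_int m)) \<le> T"
      using Tb suma by (simp add: algebra_simps)
    have Q0: "of_int \<lceil>q\<rceil> - q \<ge> 0" by linarith
    have "m \<le> \<lfloor>y'\<rfloor>" using hyp1' unfolding m_def by (simp add: le_floor_iff)
    then have fl: "real_of_int m \<le> real_of_int \<lfloor>y'\<rfloor>" by simp
    have "(y' - of_int \<lfloor>y'\<rfloor>) * (of_int \<lceil>q\<rceil> - q) * D \<le> (y' - of_int m) * (of_int \<lceil>q\<rceil> - q) * D"
      using fl Q0 D_nn by (intro mult_right_mono) auto
    also have "\<dots> = ((of_int m + 1 - q) * (y' - of_int m)) * D" using cm by (simp add: algebra_simps)
    also have "\<dots> \<le> (T / real u) * D"
      using Tb2 up D_nn by (intro mult_right_mono) (auto simp: field_simps)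
    also have "\<dots> = (D * T) / real u" by simp
    also have "\<dots> \<le> (2 * DS + (4 * real l + 2) * D'S) / real u"
      using DT up by (simp add: divide_right_mono)
    also have "\<dots> \<le> 4 / real u * DS + (4 * real l + 2) / real u * D'S"
      using DS_nn up by (simp add: field_simps)
    finally show ?thesis .
  qed
  show ?thesis unfolding Let_def S_def[symmetric] using main
    unfolding q_def y'_def D_def DS_def D'S_def by simp
qed

end
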